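(* There exists a pair of orientation preserving isometries $A,B$ of $\mathbb{H}^4$ which is linked by half-turns and such that there is neither a point, a line, a plane nor a hyperplane of $\mathbb{H}^4$ invariant under both $A$ and $B$.
   Context: A plane is a $2$-dimensional totally geodesic subspace of $\mathbb{H}^4$. For a plane $P$, the half-turn $H_P$ is the composition of reflections in two orthogonal hyperplanes intersecting in $P$. A pair $A,B$ is linked by half-turns if there are planes $\alpha,\beta,\delta$ with $A=H_\alpha H_\beta$ and $B=H_\beta H_\delta$. *)

theory Defs
  imports "HOL-Analysis.Analysis"
begin

text \<open>Hyperboloid model of hyperbolic 4-space inside Minkowski space R^{4,1}.
  Coordinate 0 is the time-like coordinate.\<close>

type_synonym vec5 = "real ^ 5"
type_synonym mat5 = "real ^ 5 ^ 5"

definition mink :: "vec5 \<Rightarrow> vec5 \<Rightarrow> real" where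
  "mink x y = - (x $ 0 * y $ 0) + (\<Sum>i\<in>UNIV - {0}. x $ i * y $ i)"

definition hyp :: "vec5 set" where
  "hyp = {x. mink x x = -1 \<and> x $ 0 > 0}"

definition orient_isometry :: "mat5 \<Rightarrow> bool" where
  "orient_isometry M \<longleftrightarrow>
     (\<forall>x y. mink (M *v x) (M *v y) = mink x y) \<and> (\<lambda>x. M *v x) ` hyp \<subseteq> hyp \<and> det M > 0"

text \<open>k-dimensional totally geodesic subspace of H^4 (k = 0 point, 1 line, 2 plane,
  3 hyperplane): intersection of H^4 with a (k+1)-dimensional linear subspace meeting it.\<close>
definition geod_subspace :: "nat \<Rightarrow> vec5 set \<Rightarrow> bool" where
  "geod_subspace k S \<longleftrightarrow>
     (\<exists>V. subspace V \<and> dim V = k + 1 \<and> V \<inter> hyp \<noteq> {} \<and> S = V \<inter> hyp)"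

definition is_plane :: "vec5 set \<Rightarrow> bool" where
  "is_plane P \<longleftrightarrow> geod_subspace 2 P"

text \<open>Reflection in the hyperplane {x \<in> H^4. mink x n = 0} for a space-like normal n.\<close>
definition refl_mat :: "vec5 \<Rightarrow> mat5" where
  "refl_mat n = (\<chi> i j. (if i = j then 1 else 0)
                    - 2 * n $ i * (if j = 0 then - n $ j else n $ j) / mink n n)"

definition hyperplane_of :: "vec5 \<Rightarrow> vec5 set" where
  "hyperplane_of n = {x \<in> hyp. mink x n = 0}"

definition is_half_turn :: "vec5 set \<Rightarrow> mat5 \<Rightarrow> bool" where
  "is_half_turn P H \<longleftrightarrow> is_plane P \<and>
     (\<exists>n1 n2. mink n1 n1 > 0 \<and> mink n2 n2 > 0 \<and> mink n1 n2 = 0 \<and>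
        hyperplane_of n1 \<inter> hyperplane_of n2 = P \<and> H = refl_mat n1 ** refl_mat n2)"

definition linked_by_half_turns :: "mat5 \<Rightarrow> mat5 \<Rightarrow> bool" where
  "linked_by_half_turns A B \<longleftrightarrow>
     (\<exists>\<alpha> \<beta> \<delta> H\<alpha> H\<beta> H\<delta>. is_half_turn \<alpha> H\<alpha> \<and> is_half_turn \<beta> H\<beta> \<and> is_half_turn \<delta> H\<delta> \<and>
        A = H\<alpha> ** H\<beta> \<and> B = H\<beta> ** H\<delta>)"

definition invariant :: "mat5 \<Rightarrow> vec5 set \<Rightarrow> bool" where
  "invariant M S \<longleftrightarrow> (\<lambda>x. M *v x) ` S = S"

end

theory Submission imports Defs begin
lemma exhaust_5:
  fixes x :: 5
  shows "x = 0 \<or> x = 1 \<or> x = 2 \<or> x = 3 \<or> x = 4"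
proof (induct x)
  case (of_int z)
  then have "z = 0 \<or> z = 1 \<or> z = 2 \<or> z = 3 \<or> z = 4" by fastforce
  then show ?case by auto
qed
lemma forall_5: "(\<forall>i::5. P i) \<longleftrightarrow> P 0 \<and> P 1 \<and> P 2 \<and> P 3 \<and> P 4"
  by (metis exhaust_5)
lemma UNIV_5: "(UNIV::5 set) = {0,1,2,3,4}" using exhaust_5 by auto
lemma UNIV_minus_0: "UNIV - {0::5} = {1,2,3,4}" unfolding UNIV_5 by auto
lemma sum_5: "sum f (UNIV::5 set) = f 0 + f 1 + f 2 + f 3 + f 4" unfolding UNIV_5 by (simp add: ac_simps)

lemma mink_expand: "mink x y = - (x$0*y$0) + x$1*y$1 + x$2*y$2 + x$3*y$3 + x$4*y$4"
  unfolding mink_def UNIV_minus_0 by (simp add: ac_simps)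

lemma mink_sym: "mink x y = mink y x" by (simp add: mink_expand mult.commute)
lemma mink_diff: "mink x (y - z) = mink x y - mink x z" by (simp add: mink_expand algebra_simps)
lemma mink_add: "mink x (y + z) = mink x y + mink x z" by (simp add: mink_expand algebra_simps)
lemma mink_scale: "mink x (c *\<^sub>R y) = c * mink x y" by (simp add: mink_expand algebra_simps)
lemma mink_diff1: "mink (y - z) x = mink y x - mink z x" by (simp add: mink_expand algebra_simps)
lemma mink_add1: "mink (y + z) x = mink y x + mink z x" by (simp add: mink_expand algebra_simps)
lemma mink_scale1: "mink (c *\<^sub>R y) x = c * mink y x" by (simp add: mink_expand algebra_simps)
lemmas mink_lin = mink_diff mink_add mink_scale mink_diff1 mink_add1 mink_scale1

lemma Jsum: "(\<Sum>j\<in>UNIV. (if j = 0 then - n $ j else n $ j) * x $ j) = mink n x"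
  by (simp add: sum_5 mink_expand)

lemma refl_apply: "refl_mat n *v x = x - (2 * mink n x / mink n n) *\<^sub>R n"
proof -
  have "(refl_mat n *v x) $ i = x $ i - (2 * mink n x / mink n n) * n $ i" for i
  proof -
    have "(refl_mat n *v x) $ i = (\<Sum>j\<in>UNIV. (if i = j then x $ j else 0)
        - (2 * n $ i / mink n n) * ((if j = 0 then - n $ j else n $ j) * x $ j))"
      unfolding matrix_vector_mult_def refl_mat_def
      by (simp, rule sum.cong) (auto simp: algebra_simps)
    also have "\<dots> = x $ i - (2 * n $ i / mink n n) * mink n x"
    proof -
      have "(\<Sum>j\<in>UNIV. (2 * n $ i / mink n n) * ((if j = 0 then - n $ j else n $ j) * x $ j))
          = (2 * n $ i / mink n n) * mink n x"
        by (simp only: sum_distrib_left[symmetric] Jsum)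
      then show ?thesis by (simp only: sum_subtractf) simp
    qed
    finally show ?thesis by simp
  qed
  then show ?thesis by (simp add: vec_eq_iff)
qed

lemma refl_refl:
  assumes "mink n n \<noteq> 0"
  shows "refl_mat n *v (refl_mat n *v x) = x"
proof -
  have "mink n (refl_mat n *v x) = - mink n x"
    using assms by (simp add: refl_apply mink_lin)
  moreover have "refl_mat n *v (refl_mat n *v x) = (refl_mat n *v x) - (2 * mink n (refl_mat n *v x) / mink n n) *\<^sub>R n"
    by (rule refl_apply)
  ultimately show ?thesis by (simp add: refl_apply)
qed

lemma refl_mink:
  assumes "mink n n \<noteq> 0"
  shows "mink (refl_mat n *v x) (refl_mat n *v y) = mink x y"
proof -
  define a where "a = 2 * mink n x / mink n n"
  define b where "b = 2 * mink n y / mink n n"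
  have "mink (refl_mat n *v x) (refl_mat n *v y) = mink (x - a *\<^sub>R n) (y - b *\<^sub>R n)"
    by (simp add: refl_apply a_def b_def)
  also have "\<dots> = mink x y - b * mink n x - a * mink n y + a * b * mink n n"
    by (simp add: mink_lin mink_sym[of x n] algebra_simps)
  also have "a * b * mink n n = b * mink n x + a * mink n y"
    using assms by (simp add: a_def b_def field_simps)
  finally show ?thesis by simp
qed

lemma cs4: "((a1::real)*b1+a2*b2+a3*b3+a4*b4)^2 \<le> (a1^2+a2^2+a3^2+a4^2)*(b1^2+b2^2+b3^2+b4^2)"
proof -
  have "(a1^2+a2^2+a3^2+a4^2)*(b1^2+b2^2+b3^2+b4^2) - (a1*b1+a2*b2+a3*b3+a4*b4)^2
     = (a1*b2-a2*b1)^2 + (a1*b3-a3*b1)^2 + (a1*b4-a4*b1)^2 + (a2*b3-a3*b2)^2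
       + (a2*b4-a4*b2)^2 + (a3*b4-a4*b3)^2"
    unfolding power2_eq_square by (simp add: algebra_simps)
  moreover have "0 \<le> (a1*b2-a2*b1)^2 + (a1*b3-a3*b1)^2 + (a1*b4-a4*b1)^2 + (a2*b3-a3*b2)^2
       + (a2*b4-a4*b2)^2 + (a3*b4-a4*b3)^2" by simp
  ultimately show ?thesis by linarith
qed

lemma rev_cs:
  assumes x: "mink x x = -1" "x$0 > 0" and y: "mink y y = -1" "y$0 \<le> 0"
  shows "mink x y > 0"
proof -
  define s where "s = x$1*y$1+x$2*y$2+x$3*y$3+x$4*y$4"
  have hm: "mink x y = - (x$0*y$0) + s" by (simp add: mink_expand s_def)
  have hx: "x$1^2+x$2^2+x$3^2+x$4^2 = x$0^2 - 1" using x by (simp add: mink_expand power2_eq_square)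
  have hy: "y$1^2+y$2^2+y$3^2+y$4^2 = y$0^2 - 1" using y by (simp add: mink_expand power2_eq_square)
  have "0 \<le> x$1^2+x$2^2+x$3^2+x$4^2" by simp
  then have x1: "x$0^2 \<ge> 1" using hx by linarith
  have "0 \<le> y$1^2+y$2^2+y$3^2+y$4^2" by simp
  then have y1: "y$0^2 \<ge> 1" using hy by linarith
  have "s^2 \<le> (x$0^2 - 1) * (y$0^2 - 1)" unfolding s_def hx[symmetric] hy[symmetric] by (rule cs4)
  also have "\<dots> < (x$0 * y$0)^2"
  proof -
    have "(x$0^2 - 1) * (y$0^2 - 1) = (x$0 * y$0)^2 - x$0^2 - y$0^2 + 1"
      by (simp add: power_mult_distrib algebra_simps)
    then show ?thesis using x1 y1 by linarith
  qed
  finally have "s^2 < (- (x$0 * y$0))^2" by simp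
  moreover have "0 \<le> - (x$0 * y$0)" using x y by (simp add: mult_nonneg_nonpos)
  ultimately have "\<bar>s\<bar> < - (x$0 * y$0)"
    using power2_less_imp_less[of "\<bar>s\<bar>" "- (x$0 * y$0)"] by simp
  then show ?thesis using hm by linarith
qed

lemma refl_hyp:
  assumes q: "mink n n > 0" and x: "x \<in> hyp"
  shows "refl_mat n *v x \<in> hyp"
proof -
  let ?y = "refl_mat n *v x"
  have xx: "mink x x = -1" "x$0 > 0" using x by (auto simp: hyp_def)
  have yy: "mink ?y ?y = -1" using refl_mink[of n x x] q xx by simp
  have "mink x ?y = mink x x - 2 * (mink n x)^2 / mink n n"
    by (simp add: refl_apply mink_lin mink_sym[of x n] power2_eq_square)
  also have "\<dots> < 0"
  proof -
    have "0 \<le> 2 * (mink n x)^2 / mink n n" using q by simp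
    then show ?thesis using xx by linarith
  qed
  finally have neg: "mink x ?y < 0" .
  have "?y $ 0 > 0"
  proof (rule ccontr)
    assume "\<not> ?y $ 0 > 0"
    then have "mink x ?y > 0" using rev_cs[OF xx yy] by simp
    with neg show False by simp
  qed
  with yy show ?thesis by (simp add: hyp_def)
qed

definition rk2 :: "vec5 \<Rightarrow> vec5 \<Rightarrow> vec5 \<Rightarrow> vec5 \<Rightarrow> mat5" where
  "rk2 a b c d = (\<chi> i j. (if i = j then 1 else 0) - a$i * (if j = 0 then - b$j else b$j)
       - c$i * (if j = 0 then - d$j else d$j))"

lemma rk2_apply: "rk2 a b c d *v x = x - mink b x *\<^sub>R a - mink d x *\<^sub>R c"
proof -
  have "(rk2 a b c d *v x) $ i = x $ i - mink b x * a $ i - mink d x * c $ i" for i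
  proof -
    have "(rk2 a b c d *v x) $ i = (\<Sum>j\<in>UNIV. (if i = j then x $ j else 0)
        - a $ i * ((if j = 0 then - b $ j else b $ j) * x $ j)
        - c $ i * ((if j = 0 then - d $ j else d $ j) * x $ j))"
      unfolding matrix_vector_mult_def rk2_def
      by (simp, rule sum.cong) (auto simp: algebra_simps)
    also have "\<dots> = x $ i - a $ i * mink b x - c $ i * mink d x"
      by (simp only: sum_subtractf sum_distrib_left[symmetric] Jsum) simp
    finally show ?thesis by simp
  qed
  then show ?thesis by (simp add: vec_eq_iff)
qed

lemma half_apply:
  assumes "mink n1 n2 = 0"
  shows "(refl_mat n1 ** refl_mat n2) *v x
     = x - (2 * mink n1 x / mink n1 n1) *\<^sub>R n1 - (2 * mink n2 x / mink n2 n2) *\<^sub>R n2"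
proof -
  have "mink n1 (refl_mat n2 *v x) = mink n1 x"
    using assms by (simp add: refl_apply mink_lin)
  have "(refl_mat n1 ** refl_mat n2) *v x = refl_mat n1 *v (refl_mat n2 *v x)"
    by (simp add: matrix_vector_mul_assoc)
  also have "\<dots> = refl_mat n2 *v x - (2 * mink n1 (refl_mat n2 *v x) / mink n1 n1) *\<^sub>R n1"
    by (rule refl_apply)
  also have "\<dots> = x - (2 * mink n2 x / mink n2 n2) *\<^sub>R n2 - (2 * mink n1 x / mink n1 n1) *\<^sub>R n1"
    unfolding \<open>mink n1 (refl_mat n2 *v x) = mink n1 x\<close> by (simp add: refl_apply)
  finally show ?thesis by (simp add: diff_diff_eq add.commute)
qed

definition Kmat :: "vec5 \<Rightarrow> vec5 \<Rightarrow> mat5" where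
  "Kmat n1 n2 = rk2 ((1 / mink n1 n1) *\<^sub>R (n1 - n2)) n1 ((1 / mink n2 n2) *\<^sub>R (n1 + n2)) n2"

lemma K_sq:
  assumes o: "mink n1 n2 = 0" and q1: "mink n1 n1 \<noteq> 0" and q2: "mink n2 n2 \<noteq> 0"
  shows "Kmat n1 n2 ** Kmat n1 n2 = refl_mat n1 ** refl_mat n2"
proof -
  have o2: "mink n2 n1 = 0" using o by (simp add: mink_sym)
  have "Kmat n1 n2 *v (Kmat n1 n2 *v x) = (refl_mat n1 ** refl_mat n2) *v x" for x
  proof -
    let ?K = "Kmat n1 n2 *v x"
    have e1: "mink n1 ?K = - (mink n2 x * mink n1 n1 / mink n2 n2)"
      using o q1 q2 by (simp add: Kmat_def rk2_apply mink_lin field_simps)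
    have e2: "mink n2 ?K = mink n1 x * mink n2 n2 / mink n1 n1"
      using o2 q1 q2 by (simp add: Kmat_def rk2_apply mink_lin field_simps)
    have "Kmat n1 n2 *v ?K = ?K - mink n1 ?K *\<^sub>R ((1 / mink n1 n1) *\<^sub>R (n1 - n2))
        - mink n2 ?K *\<^sub>R ((1 / mink n2 n2) *\<^sub>R (n1 + n2))"
      by (simp add: Kmat_def rk2_apply)
    also have "\<dots> = (refl_mat n1 ** refl_mat n2) *v x"
      unfolding e1 e2 half_apply[OF o]
      using q1 q2 by (simp add: Kmat_def rk2_apply vec_eq_iff field_simps)
    finally show ?thesis .
  qed
  then show ?thesis by (simp add: matrix_eq matrix_vector_mul_assoc)
qed

lemma refl_sq: "mink n n \<noteq> 0 \<Longrightarrow> refl_mat n ** refl_mat n = mat 1"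
  by (simp add: matrix_eq matrix_vector_mul_assoc[symmetric] refl_refl)

lemma half_det:
  assumes o: "mink n1 n2 = 0" and q1: "mink n1 n1 \<noteq> 0" and q2: "mink n2 n2 \<noteq> 0"
  shows "det (refl_mat n1 ** refl_mat n2) > 0"
proof -
  have d1: "det (refl_mat n1) * det (refl_mat n1) = 1"
    using refl_sq[OF q1] det_mul[of "refl_mat n1" "refl_mat n1"] by simp
  have d2: "det (refl_mat n2) * det (refl_mat n2) = 1"
    using refl_sq[OF q2] det_mul[of "refl_mat n2" "refl_mat n2"] by simp
  have ne: "det (refl_mat n1 ** refl_mat n2) \<noteq> 0"
    using d1 d2 by (auto simp: det_mul)
  have "det (refl_mat n1 ** refl_mat n2) = det (Kmat n1 n2) * det (Kmat n1 n2)"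
    using K_sq[OF o q1 q2] det_mul by metis
  then have "det (refl_mat n1 ** refl_mat n2) \<ge> 0" by simp
  with ne show ?thesis by simp
qed

definition iso :: "mat5 \<Rightarrow> bool" where
  "iso M \<longleftrightarrow> (\<forall>x y. mink (M *v x) (M *v y) = mink x y) \<and> (\<forall>x\<in>hyp. M *v x \<in> hyp)"

lemma iso_mult: "iso M \<Longrightarrow> iso N \<Longrightarrow> iso (M ** N)"
  by (simp add: iso_def matrix_vector_mul_assoc[symmetric])

lemma iso_refl: "mink n n > 0 \<Longrightarrow> iso (refl_mat n)"
  by (simp add: iso_def refl_mink refl_hyp)

lemma dim5: "dim (UNIV :: vec5 set) = 5" by simp

definition Jv :: "vec5 \<Rightarrow> vec5" where "Jv n = (\<chi> j. if j = 0 then - n$j else n$j)"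

lemma inner_Jv: "inner (Jv n) x = mink n x"
  by (simp add: inner_vec_def Jv_def sum_5 mink_expand)

lemma plane_lemma:
  assumes q1: "mink n1 n1 > 0" and q2: "mink n2 n2 > 0" and o: "mink n1 n2 = 0"
    and z: "n1$0 * n2$0 = 0"
    and p: "p \<in> hyp" "mink p n1 = 0" "mink p n2 = 0"
  shows "is_plane (hyperplane_of n1 \<inter> hyperplane_of n2)"
proof -
  define V where "V = {x. mink x n1 = 0 \<and> mink x n2 = 0}"
  have sV: "subspace V"
    unfolding subspace_def V_def
    by (simp add: mink_sym[of _ n1] mink_sym[of _ n2] mink_lin) (simp add: mink_expand)
  let ?a = "Jv n1" and ?b = "Jv n2"
  have ab: "inner ?a ?b = 0"
    using o z by (auto simp: inner_vec_def Jv_def sum_5 mink_expand)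
  have a0: "?a \<noteq> 0"
  proof
    assume "?a = 0"
    then have "inner ?a n1 = 0" by simp
    with q1 show False by (simp add: inner_Jv)
  qed
  have b0: "?b \<noteq> 0"
  proof
    assume "?b = 0"
    then have "inner ?b n2 = 0" by simp
    with q2 show False by (simp add: inner_Jv)
  qed
  have neq: "?a \<noteq> ?b" using ab a0 by auto
  have pw: "pairwise orthogonal {?a, ?b}"
    unfolding pairwise_def orthogonal_def using ab by (auto simp: inner_commute[of ?b ?a])
  have ind: "independent {?a, ?b}"
    by (rule pairwise_orthogonal_independent[OF pw]) (use a0 b0 in auto)
  have d2: "dim (span {?a, ?b}) = 2"
    using dim_span_eq_card_independent[OF ind] neq by simp
  have Veq: "V = {y \<in> UNIV. \<forall>x \<in> span {?a, ?b}. orthogonal x y}"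
  proof -
    have "y \<in> V \<longleftrightarrow> (\<forall>x \<in> span {?a, ?b}. orthogonal x y)" for y
    proof
      assume "y \<in> V"
      then have "orthogonal y ?a" "orthogonal y ?b"
        by (auto simp: V_def orthogonal_def inner_commute[of y] inner_Jv mink_sym[of _ n1] mink_sym[of _ n2])
      then show "\<forall>x \<in> span {?a, ?b}. orthogonal x y"
      proof (intro ballI)
        fix x assume "x \<in> span {?a, ?b}"
        have "orthogonal y x"
          by (rule orthogonal_to_span[OF \<open>x \<in> span {?a, ?b}\<close>])
             (use \<open>orthogonal y ?a\<close> \<open>orthogonal y ?b\<close> in auto)
        then show "orthogonal x y" by (simp add: orthogonal_commute)
      qed
    next
      assume "\<forall>x \<in> span {?a, ?b}. orthogonal x y"
      then have "orthogonal ?a y" "orthogonal ?b y" by (auto intro: span_base)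
      then show "y \<in> V"
        by (auto simp: V_def orthogonal_def inner_Jv mink_sym[of _ n1] mink_sym[of _ n2])
    qed
    then show ?thesis by auto
  qed
  have "dim V + dim (span {?a, ?b}) = dim (UNIV :: vec5 set)"
    unfolding Veq by (rule dim_subspace_orthogonal_to_vectors) auto
  then have dV: "dim V = 3" using d2 by simp
  have "p \<in> V \<inter> hyp" using p by (simp add: V_def)
  moreover have "hyperplane_of n1 \<inter> hyperplane_of n2 = V \<inter> hyp"
    by (auto simp: hyperplane_of_def V_def)
  ultimately show ?thesis
    unfolding is_plane_def geod_subspace_def using sV dV by (intro exI[of _ V]) auto
qed

definition v5 :: "real \<Rightarrow> real \<Rightarrow> real \<Rightarrow> real \<Rightarrow> real \<Rightarrow> vec5" where
  "v5 a b c d e = (\<chi> i. if i = 0 then a else if i = 1 then b else if i = 2 then c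
       else if i = 3 then d else e)"

lemma v5_nth [simp]: "v5 a b c d e $ 0 = a" "v5 a b c d e $ 1 = b" "v5 a b c d e $ 2 = c"
  "v5 a b c d e $ 3 = d" "v5 a b c d e $ 4 = e"
  by (simp_all add: v5_def)

definition "na1 = v5 0 0 0 1 0"
definition "na2 = v5 0 0 0 0 1"
definition "nb1 = v5 0 (-1) (-1) 1 1"
definition "nb2 = v5 0 1 (-1) (-1) 1"
definition "nd1 = v5 (-1) 0 (-1) 1 0"
definition "nd2 = v5 0 1 0 0 (-1)"

definition "Ha = refl_mat na1 ** refl_mat na2"
definition "Hb = refl_mat nb1 ** refl_mat nb2"
definition "Hd = refl_mat nd1 ** refl_mat nd2"
definition "Am = Ha ** Hb"
definition "Bm = Hb ** Hd"

lemmas nvec_defs = na1_def na2_def nb1_def nb2_def nd1_def nd2_def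

lemma Ha_apply: "Ha *v x = v5 (x$0) (x$1) (x$2) (- x$3) (- x$4)"
  unfolding Ha_def
  by (subst half_apply) (simp_all add: nvec_defs mink_expand vec_eq_iff forall_5)

lemma Hb_apply: "Hb *v x = v5 (x$0) (x$3) (x$4) (x$1) (x$2)"
  unfolding Hb_def
  by (subst half_apply) (simp_all add: nvec_defs mink_expand vec_eq_iff forall_5 field_simps)

lemma Hd_apply: "Hd *v x = v5 (3*x$0 - 2*x$2 + 2*x$3) (x$4) (2*x$0 - x$2 + 2*x$3) (-2*x$0 + 2*x$2 - x$3) (x$1)"
  unfolding Hd_def
  by (subst half_apply) (simp_all add: nvec_defs mink_expand vec_eq_iff forall_5 field_simps)

lemma A_apply: "Am *v x = v5 (x$0) (x$3) (x$4) (- x$1) (- x$2)"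
  by (simp add: Am_def matrix_vector_mul_assoc[symmetric] Ha_apply Hb_apply)

lemma B_apply: "Bm *v x = v5 (3*x$0 - 2*x$2 + 2*x$3) (-2*x$0 + 2*x$2 - x$3) (x$1) (x$4) (2*x$0 - x$2 + 2*x$3)"
  by (simp add: Bm_def matrix_vector_mul_assoc[symmetric] Hb_apply Hd_apply)

lemma q_facts: "mink na1 na1 = 1" "mink na2 na2 = 1" "mink na1 na2 = 0"
  "mink nb1 nb1 = 4" "mink nb2 nb2 = 4" "mink nb1 nb2 = 0"
  "mink nd1 nd1 = 1" "mink nd2 nd2 = 2" "mink nd1 nd2 = 0"
  by (simp_all add: nvec_defs mink_expand)

lemma half_iso: "iso Ha" "iso Hb" "iso Hd"
  unfolding Ha_def Hb_def Hd_def by (simp_all add: iso_mult iso_refl q_facts)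

lemma half_det': "det Ha > 0" "det Hb > 0" "det Hd > 0"
  unfolding Ha_def Hb_def Hd_def by (simp_all add: half_det q_facts)

lemma orient_A: "orient_isometry Am"
  using iso_mult[OF half_iso(1,2)] half_det'(1,2)
  unfolding orient_isometry_def iso_def Am_def by (auto simp: det_mul)

lemma orient_B: "orient_isometry Bm"
  using iso_mult[OF half_iso(2,3)] half_det'(2,3)
  unfolding orient_isometry_def iso_def Bm_def by (auto simp: det_mul)

lemma ht_a: "is_half_turn (hyperplane_of na1 \<inter> hyperplane_of na2) Ha"
  unfolding is_half_turn_def
proof (intro conjI exI)
  show "is_plane (hyperplane_of na1 \<inter> hyperplane_of na2)"
    by (rule plane_lemma[where p = "v5 1 0 0 0 0"]) (simp_all add: q_facts nvec_defs hyp_def mink_expand)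
qed (simp_all add: q_facts Ha_def)

lemma ht_b: "is_half_turn (hyperplane_of nb1 \<inter> hyperplane_of nb2) Hb"
  unfolding is_half_turn_def
proof (intro conjI exI)
  show "is_plane (hyperplane_of nb1 \<inter> hyperplane_of nb2)"
    by (rule plane_lemma[where p = "v5 3 2 0 2 0"]) (simp_all add: q_facts nvec_defs hyp_def mink_expand)
qed (simp_all add: q_facts Hb_def)

lemma ht_d: "is_half_turn (hyperplane_of nd1 \<inter> hyperplane_of nd2) Hd"
  unfolding is_half_turn_def
proof (intro conjI exI)
  show "is_plane (hyperplane_of nd1 \<inter> hyperplane_of nd2)"
    by (rule plane_lemma[where p = "v5 (3/2) 0 1 (-1/2) 0"]) (simp_all add: q_facts nvec_defs hyp_def mink_expand)
qed (simp_all add: q_facts Hd_def)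

lemma linked: "linked_by_half_turns Am Bm"
  unfolding linked_by_half_turns_def Am_def Bm_def
  using ht_a ht_b ht_d by blast

lemma no_inv:
  assumes k: "k \<le> 3" and g: "geod_subspace k S" and iA: "invariant Am S" and iB: "invariant Bm S"
  shows False
proof -
  obtain V where sV: "subspace V" and dV: "dim V = k + 1" and ne: "V \<inter> hyp \<noteq> {}"
    and SV: "S = V \<inter> hyp"
    using g unfolding geod_subspace_def by blast
  have mA: "Am *v x \<in> S" if "x \<in> S" for x using iA that unfolding invariant_def by blast
  have mB: "Bm *v x \<in> S" if "x \<in> S" for x using iB that unfolding invariant_def by blast
  obtain p where pS: "p \<in> S" using ne SV by blast
  have p0: "p$0 > 0" using pS SV by (auto simp: hyp_def)
  have "p \<in> V" "Am *v (Am *v p) \<in> V" using pS mA SV by auto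
  then have "p + Am *v (Am *v p) \<in> V" using sV by (simp add: subspace_add)
  moreover have "p + Am *v (Am *v p) = (2 * p$0) *\<^sub>R v5 1 0 0 0 0"
    by (simp add: A_apply vec_eq_iff forall_5)
  ultimately have "(1 / (2 * p$0)) *\<^sub>R ((2 * p$0) *\<^sub>R v5 1 0 0 0 0) \<in> V"
    using sV by (metis subspace_scale)
  then have "v5 1 0 0 0 0 \<in> V" using p0 by simp
  moreover have "v5 1 0 0 0 0 \<in> hyp" by (simp add: hyp_def mink_expand)
  ultimately have e0: "v5 1 0 0 0 0 \<in> S" using SV by simp
  have w1: "v5 3 (-2) 0 0 2 \<in> S" using mB[OF e0] by (simp add: B_apply)
  have w2: "v5 3 0 2 2 0 \<in> S" using mA[OF w1] by (simp add: A_apply)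
  have w3: "v5 9 (-6) (-2) 2 6 \<in> S" using mB[OF w1] by (simp add: B_apply)
  have w4: "v5 9 (-4) 0 0 8 \<in> S" using mB[OF w2] by (simp add: B_apply)
  have inV: "v5 1 0 0 0 0 \<in> V" "v5 3 (-2) 0 0 2 \<in> V" "v5 3 0 2 2 0 \<in> V"
    "v5 9 (-6) (-2) 2 6 \<in> V" "v5 9 (-4) 0 0 8 \<in> V"
    using e0 w1 w2 w3 w4 SV by auto
  have "x \<in> V" for x
  proof -
    have "x = (x$0 - 3 * (x$4 - x$1) / 4 - 3 * (x$2 + x$3) / 4) *\<^sub>R v5 1 0 0 0 0
       + ((x$4 - x$1) / 4 - 3 * (x$3 - x$2) / 4 - 3 * (x$1 + x$4) / 4) *\<^sub>R v5 3 (-2) 0 0 2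
       + ((x$2 + x$3) / 4) *\<^sub>R v5 3 0 2 2 0
       + ((x$3 - x$2) / 4) *\<^sub>R v5 9 (-6) (-2) 2 6
       + ((x$1 + x$4) / 4) *\<^sub>R v5 9 (-4) 0 0 8"
      by (simp add: vec_eq_iff forall_5 field_simps)
    also have "\<dots> \<in> V"
      using inV sV by (intro subspace_add subspace_scale) auto
    finally show ?thesis .
  qed
  then have "V = UNIV" by auto
  then have "dim V = 5" using dim5 by simp
  with dV k show False by simp
qed

theorem theorem8p1:
  shows "\<exists>A B. orient_isometry A \<and> orient_isometry B \<and> linked_by_half_turns A B \<and>
     \<not> (\<exists>k S. k \<le> 3 \<and> geod_subspace k S \<and> invariant A S \<and> invariant B S)"
  using orient_A orient_B linked no_inv by blast
end
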